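(* Fix an integer $n\ge1$ and $p\in(0,1]$. The optimal robust ratio $\gamma_n^*=\gamma_n^*(p)$ equals the optimal value of the linear program $(LP)_{n,p}$: \[ \max_{\mathbf x\ge 0,\ \gamma}\ \gamma\quad\text{s.t.}\quad x_{t,s}\le \frac1t\Big(1-p\sum_{\tau=1}^{t-1}\sum_{\sigma=1}^{\tau}x_{\tau,\sigma}\Big)\ \ \forall t\in[n],s\in[t];\qquad \gamma\le \frac{p}{1-(1-p)^k}\sum_{t=1}^n\sum_{s=1}^t x_{t,s}\,\Pr(R_t\le k\mid r_t=s)\ \ \forall k\in[n], \] where $\Pr(R_t\le k\mid r_t=s)=\sum_{i=s}^{\min(k,\,n-t+s)}\binom{i-1}{s-1}\binom{n-i}{t-s}\big/\binom{n}{t}$. Moreover, if $(\mathbf x^*,\gamma_n^* )$ is an optimal solution of $(LP)_{n,p}$, then the randomized policy that in state $(t,s)$ makes an offer with probability $t x^*_{t,s}\big/\big(1-p\sum_{\tau=1}^{t-1}\sum_{\sigma=1}^{\tau}x^*_{\tau,\sigma}\big)$ is $\gamma_n^*$-robust.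
   Context: SP-UA model: fix $n\ge1$, $p\in(0,1]$; $n$ candidates with distinct overall ranks $1,\dots,n$ ($1$ best) arrive in uniformly random order; $R_t$ is the overall rank of the $t$-th arrival and $r_t\in[t]$ its rank among the first $t$ arrivals. At each time the decision maker, seeing $r_1,\dots,r_t$, irrevocably either makes an offer (possibly randomly) or passes; an offered candidate accepts independently with probability $p$ (process stops) or rejects (process continues). State $(t,s)$: examining candidate $t$ with $r_t=s$. A policy $\mathcal P$ collects a candidate of rank $i$ if it makes an offer to that candidate and she accepts. The robust ratio of $\mathcal P$ is $\gamma_{\mathcal P}=\min_{k\in[n]}\Pr(\mathcal P\text{ collects a candidate with rank}\le k)/(1-(1-p)^k)$; $\gamma_n^*(p)=\sup_{\mathcal P}\gamma_{\mathcal P}$, and $\mathcal P$ is $\gamma$-robust if $\gamma\le\gamma_{\mathcal P}$. *)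

theory Defs
  imports "HOL-Analysis.Analysis" "HOL-Combinatorics.Multiset_Permutations"
begin

text \<open>An arrival order is a list sigma (a permutation of 1..n): sigma ! (t-1) = R_t,
  the overall rank of the t-th arrival (rank 1 is best).\<close>

text \<open>Relative rank r_t of the arrival at 0-based position j, among the first j+1 arrivals.\<close>
definition relrank :: "nat list \<Rightarrow> nat \<Rightarrow> nat" where
  "relrank \<sigma> j = card {i. i \<le> j \<and> \<sigma> ! i \<le> \<sigma> ! j}"

text \<open>A (randomized, history dependent) policy: given the relative ranks r_1..r_t observed
  so far and the list of its own past actions (True = offer made and rejected,
  False = passed) at times 1..t-1, it returns the probability of making an offer
  to candidate t.\<close>
type_synonym policy = "nat list \<Rightarrow> bool list \<Rightarrow> real"

definition policies :: "policy set" where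
  "policies = {P. \<forall>rs acts. 0 \<le> P rs acts \<and> P rs acts \<le> 1}"

text \<open>Probability, for a fixed arrival order sigma, that policy P (starting after the
  history acts) collects a candidate of overall rank \<le> k.\<close>
function win :: "real \<Rightarrow> policy \<Rightarrow> nat list \<Rightarrow> nat \<Rightarrow> bool list \<Rightarrow> real" where
  "win p P \<sigma> k acts =
     (if length \<sigma> \<le> length acts then 0 else
        (let t = length acts;
             rs = map (relrank \<sigma>) [0..<Suc t];
             q = P rs acts
         in q * (p * (if \<sigma> ! t \<le> k then 1 else 0) + (1 - p) * win p P \<sigma> k (acts @ [True]))
            + (1 - q) * win p P \<sigma> k (acts @ [False])))"
  by pat_completeness auto
termination
  by (relation "Wellfounded.measure (\<lambda>(p, P, \<sigma>, k, acts). length \<sigma> - length acts)") auto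

definition collect_prob :: "nat \<Rightarrow> real \<Rightarrow> policy \<Rightarrow> nat \<Rightarrow> real" where
  "collect_prob n p P k =
     (\<Sum>\<sigma>\<in>permutations_of_set {1..n}. win p P \<sigma> k []) / fact n"

definition robust_ratio :: "nat \<Rightarrow> real \<Rightarrow> policy \<Rightarrow> real" where
  "robust_ratio n p P = (MIN k\<in>{1..n}. collect_prob n p P k / (1 - (1 - p) ^ k))"

definition opt_robust_ratio :: "nat \<Rightarrow> real \<Rightarrow> real" where
  "opt_robust_ratio n p = (SUP P\<in>policies. robust_ratio n p P)"

definition is_robust :: "nat \<Rightarrow> real \<Rightarrow> real \<Rightarrow> policy \<Rightarrow> bool" where
  "is_robust n p \<gamma> P \<longleftrightarrow> \<gamma> \<le> robust_ratio n p P"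

definition cond_prob :: "nat \<Rightarrow> nat \<Rightarrow> nat \<Rightarrow> nat \<Rightarrow> real" where
  "cond_prob n t s k =
     (\<Sum>i=s..min k (n - t + s). real ((i - 1) choose (s - 1)) * real ((n - i) choose (t - s)))
       / real (n choose t)"

definition lp_feasible :: "nat \<Rightarrow> real \<Rightarrow> (nat \<Rightarrow> nat \<Rightarrow> real) \<Rightarrow> real \<Rightarrow> bool" where
  "lp_feasible n p x \<gamma> \<longleftrightarrow>
     (\<forall>t\<in>{1..n}. \<forall>s\<in>{1..t}. 0 \<le> x t s) \<and>
     (\<forall>t\<in>{1..n}. \<forall>s\<in>{1..t}.
        x t s \<le> (1 / real t) * (1 - p * (\<Sum>\<tau>=1..t-1. \<Sum>\<sigma>=1..\<tau>. x \<tau> \<sigma>))) \<and>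
     (\<forall>k\<in>{1..n}.
        \<gamma> \<le> p / (1 - (1 - p) ^ k) * (\<Sum>t=1..n. \<Sum>s=1..t. x t s * cond_prob n t s k))"

definition lp_value :: "nat \<Rightarrow> real \<Rightarrow> real" where
  "lp_value n p = Sup {\<gamma>. \<exists>x. lp_feasible n p x \<gamma>}"

definition lp_optimal :: "nat \<Rightarrow> real \<Rightarrow> (nat \<Rightarrow> nat \<Rightarrow> real) \<Rightarrow> real \<Rightarrow> bool" where
  "lp_optimal n p x \<gamma> \<longleftrightarrow> lp_feasible n p x \<gamma> \<and> (\<forall>x' \<gamma>'. lp_feasible n p x' \<gamma>' \<longrightarrow> \<gamma>' \<le> \<gamma>)"

definition lp_policy :: "real \<Rightarrow> (nat \<Rightarrow> nat \<Rightarrow> real) \<Rightarrow> policy" where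
  "lp_policy p x rs acts =
     (let t = length rs; s = last rs in
        real t * x t s / (1 - p * (\<Sum>\<tau>=1..t-1. \<Sum>\<sigma>=1..\<tau>. x \<tau> \<sigma>)))"

end

theory Submission
  imports Defs
begin

definition rrs :: "nat list \<Rightarrow> nat list" where
  "rrs xs = map (relrank xs) [0..<length xs]"

lemma length_rrs[simp]: "length (rrs xs) = length xs"
  by (simp add: rrs_def)

lemma nth_rrs[simp]: "j < length xs \<Longrightarrow> rrs xs ! j = relrank xs j"
  by (simp add: rrs_def)

lemma relrank_take: "i < m \<Longrightarrow> relrank (take m xs) i = relrank xs i"
  unfolding relrank_def by (rule arg_cong[where f=card]) auto

lemma take_rrs: "m \<le> length xs \<Longrightarrow> take m (rrs xs) = rrs (take m xs)"
proof (rule nth_equalityI)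
  assume "m \<le> length xs"
  thus "length (take m (rrs xs)) = length (rrs (take m xs))" by simp
  fix i assume "i < length (take m (rrs xs))"
  with \<open>m \<le> length xs\<close> have "i < m" "i < length xs" by auto
  thus "take m (rrs xs) ! i = rrs (take m xs) ! i" by (simp add: relrank_take)
qed

lemma relrank_map_mono:
  assumes "strict_mono_on (set xs) g" "j < length xs"
  shows "relrank (map g xs) j = relrank xs j"
proof -
  have "{i. i \<le> j \<and> map g xs ! i \<le> map g xs ! j} = {i. i \<le> j \<and> xs ! i \<le> xs ! j}"
    using assms by (auto simp: strict_mono_on_less_eq)
  thus ?thesis unfolding relrank_def by simp
qed

lemma rrs_map_mono: "strict_mono_on (set xs) g \<Longrightarrow> rrs (map g xs) = rrs xs"
  by (rule nth_equalityI) (auto simp: relrank_map_mono)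

lemma relrank_bounds:
  assumes "j < length xs"
  shows "1 \<le> relrank xs j" "relrank xs j \<le> Suc j"
proof -
  have fin: "finite {i. i \<le> j \<and> xs ! i \<le> xs ! j}" by (rule finite_subset[of _ "{..j}"]) auto
  have "j \<in> {i. i \<le> j \<and> xs ! i \<le> xs ! j}" by simp
  hence "0 < card {i. i \<le> j \<and> xs ! i \<le> xs ! j}" using fin by (auto simp: card_gt_0_iff)
  thus "1 \<le> relrank xs j" unfolding relrank_def by simp
  have "card {i. i \<le> j \<and> xs ! i \<le> xs ! j} \<le> card {..j}" by (rule card_mono) auto
  thus "relrank xs j \<le> Suc j" unfolding relrank_def by simp
qed

lemma relrank_last:
  assumes "distinct xs" "Suc j = length xs"
  shows "relrank xs j = card {y\<in>set xs. y \<le> xs ! j}"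
proof -
  let ?S = "{i\<in>{..<length xs}. xs ! i \<le> xs ! j}"
  have e1: "{i. i \<le> j \<and> xs ! i \<le> xs ! j} = ?S"
    using assms by auto
  have e2: "(!) xs ` ?S = {y\<in>set xs. y \<le> xs ! j}"
    by (auto simp: set_conv_nth)
  have inj: "inj_on ((!) xs) ?S"
    by (rule inj_on_nth[OF assms(1)]) auto
  have "card ((!) xs ` ?S) = card ?S" by (rule card_image[OF inj])
  thus ?thesis unfolding relrank_def e1 e2 by simp
qed

definition Ls :: "nat \<Rightarrow> nat set \<Rightarrow> nat list set" where
  "Ls m V = {xs. distinct xs \<and> set xs \<subseteq> V \<and> length xs = m}"

lemma finite_Ls: "finite V \<Longrightarrow> finite (Ls m V)"
  unfolding Ls_def by (rule finite_subset[OF _ finite_lists_length_eq[of V m]]) auto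

lemma sum_Ls_group:
  assumes "finite V"
  shows "(\<Sum>xs\<in>Ls m V. h xs) = (\<Sum>A\<in>{A. A \<subseteq> V \<and> card A = m}. \<Sum>xs\<in>permutations_of_set A. h xs)"
proof -
  have fT: "finite {A. A \<subseteq> V \<and> card A = m}" using assms by auto
  have "(\<Sum>xs\<in>Ls m V. h xs) = (\<Sum>A\<in>{A. A \<subseteq> V \<and> card A = m}. \<Sum>xs\<in>{xs\<in>Ls m V. set xs = A}. h xs)"
    by (rule sum.group[symmetric, OF finite_Ls[OF assms] fT])
       (auto simp: Ls_def distinct_card)
  also have "\<dots> = (\<Sum>A\<in>{A. A \<subseteq> V \<and> card A = m}. \<Sum>xs\<in>permutations_of_set A. h xs)"
    by (rule sum.cong[OF refl], rule sum.cong)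
       (auto simp: Ls_def permutations_of_set_def distinct_card)
  finally show ?thesis .
qed

lemma sum_perms_rank:
  assumes "finite A" "card A = m"
  shows "(\<Sum>ys\<in>permutations_of_set A. G (rrs ys)) = (\<Sum>\<rho>\<in>permutations_of_set {1..m}. G (rrs \<rho>))"
proof -
  define g where "g a = card {y\<in>A. y \<le> a}" for a
  have sm: "strict_mono_on A g"
  proof (rule strict_mono_onI)
    fix a b assume ab: "a \<in> A" "b \<in> A" "a < b"
    have "b \<in> {y\<in>A. y \<le> b}" "b \<notin> {y\<in>A. y \<le> a}" using ab by auto
    moreover have "{y\<in>A. y \<le> a} \<subseteq> {y\<in>A. y \<le> b}" using ab by auto
    ultimately have "{y\<in>A. y \<le> a} \<subset> {y\<in>A. y \<le> b}" by blast
    thus "g a < g b" unfolding g_def using assms(1) by (intro psubset_card_mono) auto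
  qed
  have inj: "inj_on g A" using sm by (rule strict_mono_on_imp_inj_on)
  have sub: "g ` A \<subseteq> {1..m}"
  proof
    fix y assume "y \<in> g ` A"
    then obtain a where a: "a \<in> A" "y = g a" by auto
    have "{y\<in>A. y \<le> a} \<noteq> {}" using a by auto
    hence "g a \<noteq> 0" unfolding g_def using assms(1) by simp
    moreover have "g a \<le> card A" unfolding g_def using assms(1) by (intro card_mono) auto
    ultimately show "y \<in> {1..m}" using a assms by auto
  qed
  have img: "g ` A = {1..m}"
    using sub inj assms by (intro card_subset_eq) (auto simp: card_image)
  have "permutations_of_set {1..m} = map g ` permutations_of_set A"
    using permutations_of_set_image_inj[OF inj] img by simp
  moreover have "inj_on (map g) (permutations_of_set A)"
    by (rule inj_on_mapI, rule inj_on_subset[OF inj]) (auto simp: permutations_of_set_def)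
  ultimately have "(\<Sum>\<rho>\<in>permutations_of_set {1..m}. G (rrs \<rho>)) = (\<Sum>ys\<in>permutations_of_set A. G (rrs (map g ys)))"
    by (simp add: sum.reindex)
  also have "\<dots> = (\<Sum>ys\<in>permutations_of_set A. G (rrs ys))"
    by (rule sum.cong[OF refl], rule arg_cong[where f=G], rule rrs_map_mono)
       (use sm in \<open>auto simp: permutations_of_set_def\<close>)
  finally show ?thesis by simp
qed

lemma sum_Ls_rank:
  fixes G :: "nat list \<Rightarrow> real" and \<Phi> :: "nat set \<Rightarrow> real"
  assumes "finite V"
  shows "(\<Sum>xs\<in>Ls m V. G (rrs xs) * \<Phi> (set xs)) =
     (\<Sum>A\<in>{A. A \<subseteq> V \<and> card A = m}. \<Phi> A) * (\<Sum>\<rho>\<in>permutations_of_set {1..m}. G (rrs \<rho>))"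
proof -
  have "(\<Sum>xs\<in>Ls m V. G (rrs xs) * \<Phi> (set xs)) =
     (\<Sum>A\<in>{A. A \<subseteq> V \<and> card A = m}. \<Sum>xs\<in>permutations_of_set A. G (rrs xs) * \<Phi> A)"
    unfolding sum_Ls_group[OF assms]
    by (rule sum.cong[OF refl], rule sum.cong) (auto simp: permutations_of_set_def)
  also have "\<dots> = (\<Sum>A\<in>{A. A \<subseteq> V \<and> card A = m}. \<Phi> A * (\<Sum>\<rho>\<in>permutations_of_set {1..m}. G (rrs \<rho>)))"
  proof (rule sum.cong[OF refl])
    fix A assume A: "A \<in> {A. A \<subseteq> V \<and> card A = m}"
    hence fA: "finite A" using assms finite_subset by blast
    have "(\<Sum>xs\<in>permutations_of_set A. G (rrs xs) * \<Phi> A) = (\<Sum>xs\<in>permutations_of_set A. G (rrs xs)) * \<Phi> A"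
      by (simp add: sum_distrib_right)
    also have "(\<Sum>xs\<in>permutations_of_set A. G (rrs xs)) = (\<Sum>\<rho>\<in>permutations_of_set {1..m}. G (rrs \<rho>))"
      by (rule sum_perms_rank[OF fA]) (use A in simp)
    finally show "(\<Sum>xs\<in>permutations_of_set A. G (rrs xs) * \<Phi> A) = \<Phi> A * (\<Sum>\<rho>\<in>permutations_of_set {1..m}. G (rrs \<rho>))"
      by simp
  qed
  finally show ?thesis by (simp add: sum_distrib_right)
qed


lemma fiber_take:
  assumes "xs \<in> Ls m V"
  shows "{\<sigma>\<in>permutations_of_set V. take m \<sigma> = xs} = (\<lambda>zs. xs @ zs) ` permutations_of_set (V - set xs)"
proof safe
  fix \<sigma> assume s: "\<sigma> \<in> permutations_of_set V" "xs = take m \<sigma>"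
  have "\<sigma> = take m \<sigma> @ drop m \<sigma>" by simp
  moreover have "drop m \<sigma> \<in> permutations_of_set (V - set (take m \<sigma>))"
  proof
    have d: "distinct (take m \<sigma> @ drop m \<sigma>)" using s permutations_of_setD(2) by simp
    show "distinct (drop m \<sigma>)" using d by simp
    have "set (take m \<sigma>) \<union> set (drop m \<sigma>) = V" using s(1)
      by (metis permutations_of_setD(1) set_append append_take_drop_id)
    moreover have "set (take m \<sigma>) \<inter> set (drop m \<sigma>) = {}" using d unfolding distinct_append by blast
    ultimately show "set (drop m \<sigma>) = V - set (take m \<sigma>)" by blast
  qed
  ultimately show "\<sigma> \<in> (@) (take m \<sigma>) ` permutations_of_set (V - set (take m \<sigma>))" by blast
next
  fix zs assume z: "zs \<in> permutations_of_set (V - set xs)"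
  show "xs @ zs \<in> permutations_of_set V"
    using z assms by (auto simp: permutations_of_set_def Ls_def)
  show "take m (xs @ zs) = xs" using assms by (simp add: Ls_def)
qed

lemma sum_perms_take:
  fixes F :: "nat list \<Rightarrow> real"
  assumes "finite V" "m \<le> card V"
  shows "(\<Sum>\<sigma>\<in>permutations_of_set V. F (take m \<sigma>)) = fact (card V - m) * (\<Sum>xs\<in>Ls m V. F xs)"
proof -
  have "(\<Sum>\<sigma>\<in>permutations_of_set V. F (take m \<sigma>)) =
        (\<Sum>xs\<in>Ls m V. \<Sum>\<sigma>\<in>{\<sigma>\<in>permutations_of_set V. take m \<sigma> = xs}. F (take m \<sigma>))"
  proof (rule sum.group[symmetric, OF _ finite_Ls[OF assms(1)]])
    show "finite (permutations_of_set V)" by simp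
    show "take m ` permutations_of_set V \<subseteq> Ls m V"
    proof
      fix ys assume "ys \<in> take m ` permutations_of_set V"
      then obtain \<sigma> where s: "\<sigma> \<in> permutations_of_set V" "ys = take m \<sigma>" by blast
      have "length \<sigma> = card V" by (rule length_finite_permutations_of_set[OF s(1)])
      moreover have "distinct \<sigma>" "set \<sigma> = V" using s(1) by (auto dest: permutations_of_setD)
      ultimately show "ys \<in> Ls m V" using s(2) assms(2) by (auto simp: Ls_def dest: in_set_takeD)
    qed
  qed
  also have "\<dots> = (\<Sum>xs\<in>Ls m V. fact (card V - m) * F xs)"
  proof (rule sum.cong[OF refl])
    fix xs assume xs: "xs \<in> Ls m V"
    have "(\<Sum>\<sigma>\<in>{\<sigma>\<in>permutations_of_set V. take m \<sigma> = xs}. F (take m \<sigma>)) =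
          (\<Sum>\<sigma>\<in>{\<sigma>\<in>permutations_of_set V. take m \<sigma> = xs}. F xs)" by simp
    also have "\<dots> = real (card {\<sigma>\<in>permutations_of_set V. take m \<sigma> = xs}) * F xs" by simp
    also have "card {\<sigma>\<in>permutations_of_set V. take m \<sigma> = xs} = fact (card V - m)"
    proof -
      have "card ((\<lambda>zs. xs @ zs) ` permutations_of_set (V - set xs)) = card (permutations_of_set (V - set xs))"
        by (rule card_image) (auto simp: inj_on_def)
      also have "\<dots> = fact (card (V - set xs))" using assms by simp
      also have "card (V - set xs) = card V - m"
      proof -
        have "set xs \<subseteq> V" "distinct xs" "length xs = m" using xs by (auto simp: Ls_def)
        thus ?thesis using assms(1) by (simp add: card_Diff_subset finite_subset distinct_card)
      qed
      finally show ?thesis using fiber_take[OF xs] by simp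
    qed
    finally show "(\<Sum>\<sigma>\<in>{\<sigma>\<in>permutations_of_set V. take m \<sigma> = xs}. F (take m \<sigma>)) = fact (card V - m) * F xs"
      by simp
  qed
  finally show ?thesis by (simp add: sum_distrib_left)
qed

lemma sum_perms_rrs_take:
  fixes G :: "nat list \<Rightarrow> real"
  assumes "m \<le> n"
  shows "(\<Sum>\<sigma>\<in>permutations_of_set {1..n}. G (take m (rrs \<sigma>))) =
         fact n / fact m * (\<Sum>\<rho>\<in>permutations_of_set {1..m}. G (rrs \<rho>))"
proof -
  have "(\<Sum>\<sigma>\<in>permutations_of_set {1..n}. G (take m (rrs \<sigma>))) =
        (\<Sum>\<sigma>\<in>permutations_of_set {1..n}. G (rrs (take m \<sigma>)))"
    by (rule sum.cong[OF refl]) (use assms in \<open>auto simp: take_rrs length_finite_permutations_of_set\<close>)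
  also have "\<dots> = fact (n - m) * (\<Sum>xs\<in>Ls m {1..n}. G (rrs xs) * (\<lambda>_. 1) (set xs))"
    using sum_perms_take[of "{1..n}" m "\<lambda>xs. G (rrs xs)"] assms by simp
  also have "\<dots> = fact (n - m) * (real (n choose m) * (\<Sum>\<rho>\<in>permutations_of_set {1..m}. G (rrs \<rho>)))"
    using sum_Ls_rank[where V="{1..n}" and m=m and G=G and \<Phi>="\<lambda>_. 1"] n_subsets[of "{1..n}" m] by simp
  also have "\<dots> = fact n / fact m * (\<Sum>\<rho>\<in>permutations_of_set {1..m}. G (rrs \<rho>))"
    using binomial_fact[OF assms, where 'a=real] by (simp add: field_simps)
  finally show ?thesis .
qed

lemma last_rank_perm:
  assumes "\<rho> \<in> permutations_of_set {1..m}" "Suc j = m"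
  shows "rrs \<rho> ! j = \<rho> ! j"
proof -
  have len: "length \<rho> = m" using assms length_finite_permutations_of_set by fastforce
  have d: "distinct \<rho>" and st: "set \<rho> = {1..m}" using assms(1) by (auto dest: permutations_of_setD)
  have "\<rho> ! j \<in> {1..m}" using st len assms(2) by (metis lessI nth_mem)
  hence "{y\<in>set \<rho>. y \<le> \<rho> ! j} = {1..\<rho> ! j}" using st by auto
  thus ?thesis using relrank_last[OF d] len assms(2) by simp
qed

lemma split_last:
  fixes f :: "nat list \<Rightarrow> real"
  assumes "s \<in> {1..Suc j}"
  shows "(\<Sum>\<rho>\<in>permutations_of_set {1..Suc j}. (if rrs \<rho> ! j = s then f (take j (rrs \<rho>)) else 0)) =
         (\<Sum>\<rho>\<in>permutations_of_set {1..j}. f (rrs \<rho>))"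
proof -
  let ?P = "permutations_of_set {1..Suc j}"
  let ?S = "{\<rho>\<in>?P. \<rho> ! j = s}"
  have len: "\<And>\<rho>. \<rho> \<in> ?P \<Longrightarrow> length \<rho> = Suc j"
    using length_finite_permutations_of_set by fastforce
  have "(\<Sum>\<rho>\<in>?P. (if rrs \<rho> ! j = s then f (take j (rrs \<rho>)) else 0)) =
        (\<Sum>\<rho>\<in>?P. (if \<rho> ! j = s then f (rrs (take j \<rho>)) else 0))"
  proof (rule sum.cong[OF refl])
    fix \<rho> assume r: "\<rho> \<in> ?P"
    have e1: "rrs \<rho> ! j = \<rho> ! j" by (rule last_rank_perm[OF r]) simp
    have e2: "take j (rrs \<rho>) = rrs (take j \<rho>)" using len[OF r] by (simp add: take_rrs)
    show "(if rrs \<rho> ! j = s then f (take j (rrs \<rho>)) else 0) = (if \<rho> ! j = s then f (rrs (take j \<rho>)) else 0)"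
      by (simp only: e1 e2)
  qed
  also have "\<dots> = (\<Sum>\<rho>\<in>?S. f (rrs (take j \<rho>)))"
    by (simp add: sum.inter_filter)
  also have "?S = (\<lambda>ys. ys @ [s]) ` permutations_of_set ({1..Suc j} - {s})"
  proof safe
    fix \<rho> assume r: "\<rho> \<in> ?P" "s = \<rho> ! j"
    have l: "length \<rho> = Suc j" using len r by simp
    have e: "\<rho> = take j \<rho> @ [\<rho> ! j]" using l take_Suc_conv_app_nth[of j \<rho>] by simp
    have d: "distinct (take j \<rho> @ [\<rho> ! j])" by (subst e[symmetric]) (rule permutations_of_setD(2)[OF r(1)])
    have st: "set (take j \<rho> @ [\<rho> ! j]) = {1..Suc j}" by (subst e[symmetric]) (rule permutations_of_setD(1)[OF r(1)])
    have "set (take j \<rho>) = {1..Suc j} - {\<rho> ! j}" using d st by auto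
    hence "take j \<rho> \<in> permutations_of_set ({1..Suc j} - {\<rho> ! j})" using d by auto
    thus "\<rho> \<in> (\<lambda>ys. ys @ [\<rho> ! j]) ` permutations_of_set ({1..Suc j} - {\<rho> ! j})" using e by blast
  next
    fix ys assume y: "ys \<in> permutations_of_set ({1..Suc j} - {s})"
    have l: "length ys = j" using length_finite_permutations_of_set[OF y] assms by simp
    have "set ys = {1..Suc j} - {s}" "distinct ys" using y by (auto dest: permutations_of_setD)
    hence "set (ys @ [s]) = {1..Suc j}" "distinct (ys @ [s])"
      using insert_Diff[OF assms] by simp_all
    thus "ys @ [s] \<in> ?P" by blast
    show "(ys @ [s]) ! j = s" using l by (simp add: nth_append)
  qed
  also have "(\<Sum>\<rho>\<in>(\<lambda>ys. ys @ [s]) ` permutations_of_set ({1..Suc j} - {s}). f (rrs (take j \<rho>))) =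
     (\<Sum>ys\<in>permutations_of_set ({1..Suc j} - {s}). f (rrs ys))"
  proof (subst sum.reindex)
    show "inj_on (\<lambda>ys. ys @ [s]) (permutations_of_set ({1..Suc j} - {s}))" by (auto simp: inj_on_def)
    show "sum ((\<lambda>\<rho>. f (rrs (take j \<rho>))) \<circ> (\<lambda>ys. ys @ [s])) (permutations_of_set ({1..Suc j} - {s})) =
          (\<Sum>ys\<in>permutations_of_set ({1..Suc j} - {s}). f (rrs ys))"
    proof (rule sum.cong[OF refl])
      fix ys assume y: "ys \<in> permutations_of_set ({1..Suc j} - {s})"
      have "length ys = j" using length_finite_permutations_of_set[OF y] assms by simp
      thus "((\<lambda>\<rho>. f (rrs (take j \<rho>))) \<circ> (\<lambda>ys. ys @ [s])) ys = f (rrs ys)" by simp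
    qed
  qed
  also have "\<dots> = (\<Sum>\<rho>\<in>permutations_of_set {1..j}. f (rrs \<rho>))"
    by (rule sum_perms_rank) (use assms in auto)
  finally show ?thesis .
qed

lemma indep_last:
  fixes f :: "nat list \<Rightarrow> real"
  assumes "j < n" "s \<in> {1..Suc j}"
  shows "(\<Sum>\<sigma>\<in>permutations_of_set {1..n}. (if relrank \<sigma> j = s then 1 else 0) * f (take j (rrs \<sigma>))) =
         (\<Sum>\<sigma>\<in>permutations_of_set {1..n}. f (take j (rrs \<sigma>))) / real (Suc j)"
proof -
  define G where "G r = (if r ! j = s then f (take j r) else 0)" for r
  have "(\<Sum>\<sigma>\<in>permutations_of_set {1..n}. (if relrank \<sigma> j = s then 1 else 0) * f (take j (rrs \<sigma>))) =
        (\<Sum>\<sigma>\<in>permutations_of_set {1..n}. G (take (Suc j) (rrs \<sigma>)))"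
    by (rule sum.cong[OF refl]) (use assms in \<open>auto simp: G_def dest: length_finite_permutations_of_set\<close>)
  also have "\<dots> = fact n / fact (Suc j) * (\<Sum>\<rho>\<in>permutations_of_set {1..Suc j}. G (rrs \<rho>))"
    using assms by (intro sum_perms_rrs_take) auto
  also have "(\<Sum>\<rho>\<in>permutations_of_set {1..Suc j}. G (rrs \<rho>)) = (\<Sum>\<rho>\<in>permutations_of_set {1..j}. f (rrs \<rho>))"
    unfolding G_def by (rule split_last[OF assms(2)])
  also have "(\<Sum>\<sigma>\<in>permutations_of_set {1..n}. f (take j (rrs \<sigma>))) = fact n / fact j * (\<Sum>\<rho>\<in>permutations_of_set {1..j}. f (rrs \<rho>))"
    using assms by (intro sum_perms_rrs_take) auto
  moreover have "\<And>a b c k. (a::real) / (b * c) * k = (a / c * k) / b"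
    by (simp add: divide_inverse inverse_mult_distrib mult_ac)
  ultimately show ?thesis by (simp only: fact_Suc of_nat_Suc[symmetric])
qed

lemma rank_lt_mono:
  fixes A :: "nat set"
  assumes "finite A" "i \<in> A" "i < a"
  shows "card {y\<in>A. y < i} < card {y\<in>A. y < a}"
proof -
  have "{y\<in>A. y < i} \<subset> {y\<in>A. y < a}"
  proof -
    have "{y\<in>A. y < i} \<subseteq> {y\<in>A. y < a}" using assms by (auto intro: less_trans)
    moreover have "i \<in> {y\<in>A. y < a}" "i \<notin> {y\<in>A. y < i}" using assms by auto
    ultimately show ?thesis by blast
  qed
  thus ?thesis using assms(1) by (intro psubset_card_mono) auto
qed

lemma rank_inj:
  fixes A :: "nat set"
  assumes "finite A" "a \<in> A" "i \<in> A" "card {y\<in>A. y < i} = card {y\<in>A. y < a}"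
  shows "i = a"
  using rank_lt_mono[OF assms(1,2), of i] rank_lt_mono[OF assms(1,3), of a] assms(4)
  by (cases i a rule: linorder_cases) auto

lemma count_C:
  assumes "i \<in> {1..n}" "1 \<le> s" "s \<le> m"
  shows "card {A. A \<subseteq> {1..n} \<and> card A = m \<and> i \<in> A \<and> card {y\<in>A. y < i} = s - 1} =
         ((i - 1) choose (s - 1)) * ((n - i) choose (m - s))"
proof -
  let ?BB = "{B. B \<subseteq> {1..<i} \<and> card B = s - 1}"
  let ?CC = "{C. C \<subseteq> {i<..n} \<and> card C = m - s}"
  let ?T = "{A. A \<subseteq> {1..n} \<and> card A = m \<and> i \<in> A \<and> card {y\<in>A. y < i} = s - 1}"
  define f where "f = (\<lambda>(B::nat set, C::nat set). B \<union> insert i C)"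
  have inj: "inj_on f (?BB \<times> ?CC)"
  proof (rule inj_onI, clarify)
    fix B C B' C'
    assume h: "B \<subseteq> {1..<i}" "C \<subseteq> {i<..n}" "B' \<subseteq> {1..<i}" "C' \<subseteq> {i<..n}" "f (B, C) = f (B', C')"
    have "B = f (B, C) \<inter> {..<i}" "B' = f (B', C') \<inter> {..<i}" using h(1-4) by (auto simp: f_def)
    moreover have "C = f (B, C) \<inter> {i<..}" "C' = f (B', C') \<inter> {i<..}" using h(1-4) by (auto simp: f_def)
    ultimately show "B = B' \<and> C = C'" using h(5) by simp
  qed
  have img: "f ` (?BB \<times> ?CC) = ?T"
  proof (intro equalityI subsetI)
    fix X assume "X \<in> f ` (?BB \<times> ?CC)"
    then obtain B C where h: "B \<subseteq> {1..<i}" "card B = s - 1" "C \<subseteq> {i<..n}" "card C = m - s"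
      and X: "X = B \<union> insert i C" by (auto simp: f_def)
    have fB: "finite B" using h(1) finite_subset by blast
    have fC: "finite C" using h(3) finite_subset by blast
    have 1: "X \<subseteq> {1..n}" using h assms X by auto
    have bl: "\<forall>x\<in>B. x < i" "\<forall>x\<in>C. i < x" using h(1,3) by auto
    have "B \<inter> insert i C = {}"
    proof (rule ccontr)
      assume "B \<inter> insert i C \<noteq> {}"
      then obtain x where "x \<in> B" "x \<in> insert i C" by blast
      thus False using bl by fastforce
    qed
    hence "card (B \<union> insert i C) = card B + card (insert i C)"
      using fB fC by (intro card_Un_disjoint) auto
    also have "card (insert i C) = Suc (card C)" proof -
      have "i \<notin> C" using bl(2) less_irrefl by blast
      thus ?thesis using fC by simp
    qed
    finally have 2: "card X = m" using h assms X by simp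
    have 3: "i \<in> X" using X by simp
    have "{y \<in> X. y < i} = B" using h X by auto
    hence 4: "card {y \<in> X. y < i} = s - 1" using h by simp
    show "X \<in> ?T" using 1 2 3 4 by blast
  next
    fix A assume "A \<in> ?T"
    hence h: "A \<subseteq> {1..n}" "m = card A" "i \<in> A" "s - 1 = card {y\<in>A. y < i}" by auto
    define B where "B = {y\<in>A. y < i}"
    define C where "C = {y\<in>A. i < y}"
    have fA: "finite A" using h(1) finite_subset by blast
    have AE: "A = B \<union> insert i C" using h by (auto simp: B_def C_def)
    have "card A = card B + card (insert i C)"
      unfolding AE using fA by (intro card_Un_disjoint) (auto simp: B_def C_def)
    also have "card (insert i C) = Suc (card C)" using fA by (auto simp: C_def)
    finally have cC: "card C = m - s" using h assms(2) unfolding B_def by linarith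
    have "(B, C) \<in> ?BB \<times> ?CC" using h cC by (auto simp: B_def C_def)
    thus "A \<in> f ` (?BB \<times> ?CC)" using AE by (auto simp: f_def)
  qed
  have "card ?T = card (?BB \<times> ?CC)" using card_image[OF inj] img by simp
  also have "\<dots> = card ?BB * card ?CC" by (simp add: card_cartesian_product)
  also have "card ?BB = (i - 1) choose (s - 1)" using n_subsets[of "{1..<i}" "s - 1"] by simp
  also have "card ?CC = (n - i) choose (m - s)" using n_subsets[of "{i<..n}" "m - s"] by simp
  finally show ?thesis .
qed

definition Phi :: "nat \<Rightarrow> nat \<Rightarrow> nat set \<Rightarrow> real" where
  "Phi k s A = real (card {i\<in>{1..k}. i \<in> A \<and> card {y\<in>A. y < i} = s - 1})"

lemma sum_Phi:
  assumes "m \<le> n" "s \<in> {1..m}"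
  shows "(\<Sum>A\<in>{A. A \<subseteq> {1..n} \<and> card A = m}. Phi k s A) = real (n choose m) * cond_prob n m s k"
proof -
  let ?S = "{A. A \<subseteq> {1..n} \<and> card A = m}"
  have fS: "finite ?S" by auto
  have "(\<Sum>A\<in>?S. Phi k s A) = (\<Sum>A\<in>?S. \<Sum>i\<in>{1..k}. if i \<in> A \<and> card {y\<in>A. y < i} = s - 1 then 1 else 0)"
    unfolding Phi_def by (rule sum.cong[OF refl]) (simp add: sum.inter_filter[symmetric])
  also have "\<dots> = (\<Sum>i\<in>{1..k}. \<Sum>A\<in>?S. if i \<in> A \<and> card {y\<in>A. y < i} = s - 1 then 1 else 0)"
    by (rule sum.swap)
  also have "\<dots> = (\<Sum>i\<in>{1..k}. real (card {A. A \<subseteq> {1..n} \<and> card A = m \<and> i \<in> A \<and> card {y\<in>A. y < i} = s - 1}))"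
  proof (rule sum.cong[OF refl])
    fix i
    have "(\<Sum>A\<in>?S. if i \<in> A \<and> card {y\<in>A. y < i} = s - 1 then 1 else (0::real)) =
          real (card {A\<in>?S. i \<in> A \<and> card {y\<in>A. y < i} = s - 1})"
      using fS by (simp add: sum.inter_filter[symmetric])
    also have "{A\<in>?S. i \<in> A \<and> card {y\<in>A. y < i} = s - 1} = {A. A \<subseteq> {1..n} \<and> card A = m \<and> i \<in> A \<and> card {y\<in>A. y < i} = s - 1}"
      by auto
    finally show "(\<Sum>A\<in>?S. if i \<in> A \<and> card {y\<in>A. y < i} = s - 1 then 1 else (0::real)) =
          real (card {A. A \<subseteq> {1..n} \<and> card A = m \<and> i \<in> A \<and> card {y\<in>A. y < i} = s - 1})" .
  qed
  also have "\<dots> = (\<Sum>i=s..min k (n - m + s). real ((i - 1) choose (s - 1)) * real ((n - i) choose (m - s)))"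
  proof (rule sum.mono_neutral_cong_right)
    show "finite {1..k}" by simp
    show "{s..min k (n - m + s)} \<subseteq> {1..k}" using assms by auto
  next
    show "\<forall>i\<in>{1..k} - {s..min k (n - m + s)}. real (card {A. A \<subseteq> {1..n} \<and> card A = m \<and> i \<in> A \<and> card {y\<in>A. y < i} = s - 1}) = 0"
    proof
    fix i assume i: "i \<in> {1..k} - {s..min k (n - m + s)}"
    show "real (card {A. A \<subseteq> {1..n} \<and> card A = m \<and> i \<in> A \<and> card {y\<in>A. y < i} = s - 1}) = 0"
    proof (cases "i \<le> n")
      case True
      hence c: "card {A. A \<subseteq> {1..n} \<and> card A = m \<and> i \<in> A \<and> card {y\<in>A. y < i} = s - 1} =
         ((i - 1) choose (s - 1)) * ((n - i) choose (m - s))" using i assms by (intro count_C) auto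
      have i1: "1 \<le> i" using i by auto
      have "i < s \<or> n - m + s < i" using i by auto
      hence "(i - 1) choose (s - 1) = 0 \<or> (n - i) choose (m - s) = 0"
      proof
        assume "i < s" hence "i - 1 < s - 1" using i1 by linarith
        thus ?thesis by simp
      next
        assume "n - m + s < i" hence "n - i < m - s" using assms True by auto
        thus ?thesis by simp
      qed
      thus ?thesis using c by simp
    next
      case False
      hence "{A. A \<subseteq> {1..n} \<and> card A = m \<and> i \<in> A \<and> card {y\<in>A. y < i} = s - 1} = {}" by auto
      thus ?thesis by simp
    qed
    qed
  next
    fix i assume i: "i \<in> {s..min k (n - m + s)}"
    show "real (card {A. A \<subseteq> {1..n} \<and> card A = m \<and> i \<in> A \<and> card {y\<in>A. y < i} = s - 1}) =
          real ((i - 1) choose (s - 1)) * real ((n - i) choose (m - s))"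
      using i assms by (subst count_C) auto
  qed
  also have "\<dots> = real (n choose m) * cond_prob n m s k"
  proof -
    have "real (n choose m) \<noteq> 0" using assms by simp
    thus ?thesis unfolding cond_prob_def by simp
  qed
  finally show ?thesis .
qed

lemma Phi_collapse:
  assumes xs: "xs \<in> Ls (Suc j) {1..n}"
  shows "(\<Sum>s\<in>{1..Suc j}. (if rrs xs ! j = s then g (rrs xs) else 0) * Phi k s (set xs)) =
         (if xs ! j \<le> k then 1 else 0) * g (rrs xs)"
proof -
  have d: "distinct xs" and sub: "set xs \<subseteq> {1..n}" and l: "length xs = Suc j" using xs by (auto simp: Ls_def)
  define a where "a = xs ! j"
  define A where "A = set xs"
  define r where "r = rrs xs ! j"
  have fA: "finite A" by (simp add: A_def)
  have aA: "a \<in> A" using l by (simp add: a_def A_def)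
  have a1: "1 \<le> a" using aA sub A_def by auto
  have rdef: "r = card {y\<in>A. y \<le> a}"
    using relrank_last[OF d l[symmetric]] l by (simp add: r_def a_def A_def)
  have rb: "r \<in> {1..Suc j}" using relrank_bounds[of j xs] l by (simp add: r_def)
  have "{y\<in>A. y \<le> a} = insert a {y\<in>A. y < a}" using aA by auto
  hence "r = Suc (card {y\<in>A. y < a})" using fA rdef by simp
  hence rr: "card {y\<in>A. y < a} = r - 1" by simp
  have setEq: "{i\<in>{1..k}. i \<in> A \<and> card {y\<in>A. y < i} = r - 1} = (if a \<le> k then {a} else {})"
  proof -
    have imp: "\<And>i. i \<in> A \<Longrightarrow> card {y\<in>A. y < i} = r - 1 \<Longrightarrow> i = a"
      using rank_inj[OF fA aA] rr by simp
    have s1: "{i\<in>{1..k}. i \<in> A \<and> card {y\<in>A. y < i} = r - 1} \<subseteq> {a}" using imp by blast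
    have s2: "{i\<in>{1..k}. i \<in> A \<and> card {y\<in>A. y < i} = r - 1} \<subseteq> {1..k}" by blast
    show ?thesis
    proof (cases "a \<le> k")
      case True
      hence "a \<in> {i\<in>{1..k}. i \<in> A \<and> card {y\<in>A. y < i} = r - 1}" using aA a1 rr by simp
      thus ?thesis using s1 True by auto
    next
      case False
      hence "a \<notin> {1..k}" by simp
      thus ?thesis using s1 s2 False by auto
    qed
  qed
  have ph: "Phi k r A = (if a \<le> k then 1 else 0)"
    unfolding Phi_def setEq by simp
  have "(\<Sum>s\<in>{1..Suc j}. (if rrs xs ! j = s then g (rrs xs) else 0) * Phi k s (set xs)) =
        (\<Sum>s\<in>{1..Suc j}. if s = r then g (rrs xs) * Phi k s A else 0)"
    by (rule sum.cong[OF refl]) (auto simp: r_def A_def)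
  also have "\<dots> = g (rrs xs) * Phi k r A" using rb by (simp add: sum.delta)
  finally show ?thesis using ph by (simp add: a_def)
qed

lemma aux_cancel: "(c::real) \<noteq> 0 \<Longrightarrow> c * (a / (b * c)) = a / b"
  by (simp add: divide_inverse inverse_mult_distrib mult_ac)

lemma cond_decomp:
  fixes g :: "nat list \<Rightarrow> real"
  assumes "j < n"
  shows "(\<Sum>\<sigma>\<in>permutations_of_set {1..n}. (if \<sigma> ! j \<le> k then 1 else 0) * g (take (Suc j) (rrs \<sigma>))) =
         (\<Sum>s=1..Suc j. (\<Sum>\<sigma>\<in>permutations_of_set {1..n}. (if relrank \<sigma> j = s then 1 else 0) * g (take (Suc j) (rrs \<sigma>))) * cond_prob n (Suc j) s k)"
proof -
  let ?m = "Suc j"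
  let ?V = "{1..n::nat}"
  define G where "G s r = (if r ! j = s then g r else 0)" for s r
  define K where "K s = (\<Sum>\<rho>\<in>permutations_of_set {1..?m}. G s (rrs \<rho>))" for s
  have lenP: "\<And>\<sigma>. \<sigma> \<in> permutations_of_set ?V \<Longrightarrow> length \<sigma> = n"
    using length_finite_permutations_of_set by fastforce
  have "(\<Sum>\<sigma>\<in>permutations_of_set ?V. (if \<sigma> ! j \<le> k then 1 else 0) * g (take ?m (rrs \<sigma>))) =
        (\<Sum>\<sigma>\<in>permutations_of_set ?V. (\<lambda>xs. (if xs ! j \<le> k then 1 else 0) * g (rrs xs)) (take ?m \<sigma>))"
  proof (rule sum.cong[OF refl])
    fix \<sigma> assume "\<sigma> \<in> permutations_of_set ?V"
    hence l: "length \<sigma> = n" by (rule lenP)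
    show "(if \<sigma> ! j \<le> k then 1 else 0) * g (take ?m (rrs \<sigma>)) =
          (\<lambda>xs. (if xs ! j \<le> k then 1 else 0) * g (rrs xs)) (take ?m \<sigma>)"
      using l assms by (simp add: take_rrs)
  qed
  also have "\<dots> = fact (n - ?m) * (\<Sum>xs\<in>Ls ?m ?V. (if xs ! j \<le> k then 1 else 0) * g (rrs xs))"
    using sum_perms_take[of ?V ?m "\<lambda>xs. (if xs ! j \<le> k then 1 else 0) * g (rrs xs)"] assms by simp
  also have "(\<Sum>xs\<in>Ls ?m ?V. (if xs ! j \<le> k then 1 else 0) * g (rrs xs)) =
             (\<Sum>xs\<in>Ls ?m ?V. \<Sum>s\<in>{1..?m}. G s (rrs xs) * Phi k s (set xs))"
  proof (rule sum.cong[OF refl])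
    fix xs assume xs: "xs \<in> Ls ?m ?V"
    show "(if xs ! j \<le> k then 1 else 0) * g (rrs xs) = (\<Sum>s\<in>{1..?m}. G s (rrs xs) * Phi k s (set xs))"
      unfolding G_def by (rule Phi_collapse[OF xs, symmetric])
  qed
  also have "\<dots> = (\<Sum>s\<in>{1..?m}. \<Sum>xs\<in>Ls ?m ?V. G s (rrs xs) * Phi k s (set xs))"
    by (rule sum.swap)
  also have "\<dots> = (\<Sum>s\<in>{1..?m}. real (n choose ?m) * cond_prob n ?m s k * K s)"
  proof (rule sum.cong[OF refl])
    fix s assume s: "s \<in> {1..?m}"
    have "(\<Sum>xs\<in>Ls ?m ?V. G s (rrs xs) * Phi k s (set xs)) =
          (\<Sum>A\<in>{A. A \<subseteq> ?V \<and> card A = ?m}. Phi k s A) * K s"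
      unfolding K_def by (rule sum_Ls_rank) simp
    also have "(\<Sum>A\<in>{A. A \<subseteq> ?V \<and> card A = ?m}. Phi k s A) = real (n choose ?m) * cond_prob n ?m s k"
      by (rule sum_Phi) (use assms s in auto)
    finally show "(\<Sum>xs\<in>Ls ?m ?V. G s (rrs xs) * Phi k s (set xs)) = real (n choose ?m) * cond_prob n ?m s k * K s" .
  qed
  finally have L: "(\<Sum>\<sigma>\<in>permutations_of_set ?V. (if \<sigma> ! j \<le> k then 1 else 0) * g (take ?m (rrs \<sigma>))) =
     (\<Sum>s\<in>{1..?m}. fact (n - ?m) * (real (n choose ?m) * cond_prob n ?m s k * K s))"
    by (simp only: sum_distrib_left)
  have R: "(\<Sum>\<sigma>\<in>permutations_of_set ?V. (if relrank \<sigma> j = s then 1 else 0) * g (take ?m (rrs \<sigma>))) =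
        fact n / fact ?m * K s" for s
  proof -
    have "(\<Sum>\<sigma>\<in>permutations_of_set ?V. (if relrank \<sigma> j = s then 1 else 0) * g (take ?m (rrs \<sigma>))) =
          (\<Sum>\<sigma>\<in>permutations_of_set ?V. G s (take ?m (rrs \<sigma>)))"
    proof (rule sum.cong[OF refl])
      fix \<sigma> assume "\<sigma> \<in> permutations_of_set ?V"
      hence l: "length \<sigma> = n" by (rule lenP)
      show "(if relrank \<sigma> j = s then 1 else 0) * g (take ?m (rrs \<sigma>)) = G s (take ?m (rrs \<sigma>))"
        using l assms by (simp add: G_def)
    qed
    also have "\<dots> = fact n / fact ?m * K s" unfolding K_def
      by (rule sum_perms_rrs_take) (use assms in simp)
    finally show ?thesis .
  qed
  have bf: "real (n choose ?m) = fact n / (fact ?m * fact (n - ?m))"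
    by (rule binomial_fact) (use assms in simp)
  have fc: "fact (n - ?m) * real (n choose ?m) = fact n / fact ?m"
    unfolding bf by (rule aux_cancel) simp
  show ?thesis unfolding L R
  proof (rule sum.cong[OF refl])
    fix s
    show "fact (n - ?m) * (real (n choose ?m) * cond_prob n ?m s k * K s) = fact n / fact ?m * K s * cond_prob n ?m s k"
      by (simp only: fc[symmetric] mult_ac)
  qed
qed

function offR :: "real \<Rightarrow> policy \<Rightarrow> nat list \<Rightarrow> bool list \<Rightarrow> nat \<Rightarrow> real" where
  "offR p P rs acts j =
     (if length rs \<le> length acts then 0 else
       (let t = length acts; q = P (take (Suc t) rs) acts in
        if j \<le> t then (if j = t then q else 0)
        else q * (1 - p) * offR p P rs (acts @ [True]) j + (1 - q) * offR p P rs (acts @ [False]) j))"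
  by pat_completeness auto
termination
  by (relation "Wellfounded.measure (\<lambda>(p, P, rs, acts, j). length rs - length acts)") auto

function reachR :: "real \<Rightarrow> policy \<Rightarrow> nat list \<Rightarrow> bool list \<Rightarrow> nat \<Rightarrow> real" where
  "reachR p P rs acts j =
     (if j \<le> length acts then 1 else if length rs \<le> length acts then 0 else
       (let t = length acts; q = P (take (Suc t) rs) acts in
        q * (1 - p) * reachR p P rs (acts @ [True]) j + (1 - q) * reachR p P rs (acts @ [False]) j))"
  by pat_completeness auto
termination
  by (relation "Wellfounded.measure (\<lambda>(p, P, rs, acts, j). length rs - length acts)") auto

declare offR.simps[simp del] reachR.simps[simp del] win.simps[simp del]

lemma offR_step:
  "length acts < length rs \<Longrightarrow> length acts < j \<Longrightarrow>
   offR p P rs acts j = P (take (Suc (length acts)) rs) acts * (1 - p) * offR p P rs (acts @ [True]) j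
      + (1 - P (take (Suc (length acts)) rs) acts) * offR p P rs (acts @ [False]) j"
  by (subst offR.simps) (simp add: Let_def)

lemma offR_base:
  "length acts < length rs \<Longrightarrow> offR p P rs acts (length acts) = P (take (Suc (length acts)) rs) acts"
  by (subst offR.simps) (simp add: Let_def)

lemma reachR_base: "j \<le> length acts \<Longrightarrow> reachR p P rs acts j = 1"
  by (subst reachR.simps) simp

lemma reachR_step:
  "length acts < length rs \<Longrightarrow> length acts < j \<Longrightarrow>
   reachR p P rs acts j = P (take (Suc (length acts)) rs) acts * (1 - p) * reachR p P rs (acts @ [True]) j
      + (1 - P (take (Suc (length acts)) rs) acts) * reachR p P rs (acts @ [False]) j"
  by (subst reachR.simps) (simp add: Let_def)

lemma rrs_take_map:
  "t < length \<sigma> \<Longrightarrow> map (relrank \<sigma>) [0..<Suc t] = take (Suc t) (rrs \<sigma>)"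
  by (simp add: rrs_def take_map)

lemma sum_lin: "(\<Sum>j\<in>A. c j * (a * x j + b * y j)) = a * (\<Sum>j\<in>A. c j * x j) + b * (\<Sum>j\<in>A. c j * (y j::real))"
  by (simp add: sum.distrib sum_distrib_left algebra_simps)

lemma win_offR:
  "win p P \<sigma> k acts = (\<Sum>j\<in>{length acts..<length \<sigma>}. p * (if \<sigma> ! j \<le> k then 1 else 0) * offR p P (rrs \<sigma>) acts j)"
proof (induction "length \<sigma> - length acts" arbitrary: acts rule: less_induct)
  case less
  show ?case
  proof (cases "length \<sigma> \<le> length acts")
    case True
    thus ?thesis by (subst win.simps) simp
  next
    case False
    let ?t = "length acts"
    let ?q = "P (take (Suc ?t) (rrs \<sigma>)) acts"
    let ?c = "\<lambda>j. p * (if \<sigma> ! j \<le> k then 1 else 0)"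
    have lt: "?t < length \<sigma>" using False by simp
    have IHT: "win p P \<sigma> k (acts @ [True]) = (\<Sum>j\<in>{Suc ?t..<length \<sigma>}. ?c j * offR p P (rrs \<sigma>) (acts @ [True]) j)"
      using less[of "acts @ [True]"] lt by simp
    have IHF: "win p P \<sigma> k (acts @ [False]) = (\<Sum>j\<in>{Suc ?t..<length \<sigma>}. ?c j * offR p P (rrs \<sigma>) (acts @ [False]) j)"
      using less[of "acts @ [False]"] lt by simp
    have "win p P \<sigma> k acts = ?q * (p * (if \<sigma> ! ?t \<le> k then 1 else 0) + (1 - p) * win p P \<sigma> k (acts @ [True]))
            + (1 - ?q) * win p P \<sigma> k (acts @ [False])"
    proof -
      have mp: "map (relrank \<sigma>) [0..<Suc ?t] = take (Suc ?t) (rrs \<sigma>)" by (rule rrs_take_map[OF lt])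
      show ?thesis using lt by (subst win.simps) (simp only: Let_def mp, simp)
    qed
    also have "\<dots> = ?c ?t * ?q + (\<Sum>j\<in>{Suc ?t..<length \<sigma>}. ?c j * (?q * (1 - p) * offR p P (rrs \<sigma>) (acts @ [True]) j
            + (1 - ?q) * offR p P (rrs \<sigma>) (acts @ [False]) j))"
      unfolding IHT IHF sum_lin by (simp add: algebra_simps)
    also have "\<dots> = ?c ?t * offR p P (rrs \<sigma>) acts ?t + (\<Sum>j\<in>{Suc ?t..<length \<sigma>}. ?c j * offR p P (rrs \<sigma>) acts j)"
    proof -
      have "offR p P (rrs \<sigma>) acts ?t = ?q" using lt by (simp add: offR_base)
      moreover have "(\<Sum>j\<in>{Suc ?t..<length \<sigma>}. ?c j * (?q * (1 - p) * offR p P (rrs \<sigma>) (acts @ [True]) j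
            + (1 - ?q) * offR p P (rrs \<sigma>) (acts @ [False]) j)) = (\<Sum>j\<in>{Suc ?t..<length \<sigma>}. ?c j * offR p P (rrs \<sigma>) acts j)"
        by (rule sum.cong[OF refl]) (use lt in \<open>simp add: offR_step\<close>)
      ultimately show ?thesis by simp
    qed
    also have "\<dots> = (\<Sum>j\<in>{?t..<length \<sigma>}. ?c j * offR p P (rrs \<sigma>) acts j)"
      using lt by (simp add: sum.atLeast_Suc_lessThan)
    finally show ?thesis by simp
  qed
qed

lemma reach_offR:
  assumes "length acts \<le> j" "j < length rs"
  shows "reachR p P rs acts (Suc j) = reachR p P rs acts j - p * offR p P rs acts j"
  using assms
proof (induction "length rs - length acts" arbitrary: acts rule: less_induct)
  case less
  let ?q = "P (take (Suc (length acts)) rs) acts"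
  show ?case
  proof (cases "length acts = j")
    case True
    have "reachR p P rs acts (Suc j) = ?q * (1 - p) * 1 + (1 - ?q) * 1"
      using less.prems True by (simp add: reachR_step reachR_base)
    moreover have "reachR p P rs acts j = 1" using True by (simp add: reachR_base)
    moreover have "offR p P rs acts j = ?q" using True less.prems offR_base[of acts rs p P] by simp
    ultimately show ?thesis by (simp add: algebra_simps)
  next
    case False
    hence lt: "length acts < j" using less.prems by simp
    have IH: "reachR p P rs (acts @ [b]) (Suc j) = reachR p P rs (acts @ [b]) j - p * offR p P rs (acts @ [b]) j" for b
      using less.hyps[of "acts @ [b]"] less.prems lt by simp
    show ?thesis
      using lt less.prems by (simp add: reachR_step offR_step IH algebra_simps)
  qed
qed

lemma offR_bounds:
  assumes P: "\<And>rs acts. 0 \<le> P rs acts \<and> P rs acts \<le> 1" and p: "0 \<le> p" "p \<le> 1"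
    and "length acts \<le> j" "j < length rs"
  shows "0 \<le> offR p P rs acts j \<and> offR p P rs acts j \<le> reachR p P rs acts j"
  using assms(4,5)
proof (induction "length rs - length acts" arbitrary: acts rule: less_induct)
  case less
  let ?q = "P (take (Suc (length acts)) rs) acts"
  have q: "0 \<le> ?q" "?q \<le> 1" using P by auto
  show ?case
  proof (cases "length acts = j")
    case True
    thus ?thesis using less.prems q offR_base[of acts rs p P] by (simp add: reachR_base)
  next
    case False
    hence lt: "length acts < j" using less.prems by simp
    have IH: "0 \<le> offR p P rs (acts @ [b]) j \<and> offR p P rs (acts @ [b]) j \<le> reachR p P rs (acts @ [b]) j" for b
      using less.hyps[of "acts @ [b]"] less.prems lt by simp
    have w: "0 \<le> ?q * (1 - p)" "0 \<le> 1 - ?q" using q p by auto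
    have "0 \<le> ?q * (1 - p) * offR p P rs (acts @ [True]) j + (1 - ?q) * offR p P rs (acts @ [False]) j"
      using w IH q p by (intro add_nonneg_nonneg mult_nonneg_nonneg) auto
    moreover have "?q * (1 - p) * offR p P rs (acts @ [True]) j + (1 - ?q) * offR p P rs (acts @ [False]) j
       \<le> ?q * (1 - p) * reachR p P rs (acts @ [True]) j + (1 - ?q) * reachR p P rs (acts @ [False]) j"
      using w IH q p by (intro add_mono mult_left_mono) auto
    ultimately show ?thesis using lt less.prems by (simp add: offR_step reachR_step)
  qed
qed

lemma offR_local:
  assumes "length acts \<le> j" "j < length rs"
  shows "offR p P rs acts j = offR p P (take (Suc j) rs) acts j"
  using assms
proof (induction "length rs - length acts" arbitrary: acts rule: less_induct)
  case less
  show ?case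
  proof (cases "length acts = j")
    case True
    thus ?thesis using less.prems offR_base[of acts rs p P] offR_base[of acts "take (Suc j) rs" p P] by (simp add: min_def)
  next
    case False
    hence lt: "length acts < j" using less.prems by simp
    have IH: "offR p P rs (acts @ [b]) j = offR p P (take (Suc j) rs) (acts @ [b]) j" for b
      using less.hyps[of "acts @ [b]"] less.prems lt by simp
    have tk: "take (Suc (length acts)) (take (Suc j) rs) = take (Suc (length acts)) rs" using lt by (simp add: min_def)
    show ?thesis
      using lt less.prems by (simp add: offR_step[of acts "take (Suc j) rs"] offR_step[of acts rs] IH tk)
  qed
qed

lemma reachR_local:
  assumes "length acts \<le> j" "j \<le> length rs"
  shows "reachR p P rs acts j = reachR p P (take j rs) acts j"
  using assms
proof (induction "length rs - length acts" arbitrary: acts rule: less_induct)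
  case less
  show ?case
  proof (cases "length acts = j")
    case True
    thus ?thesis by (simp add: reachR_base)
  next
    case False
    hence lt: "length acts < j" using less.prems by simp
    have IH: "reachR p P rs (acts @ [b]) j = reachR p P (take j rs) (acts @ [b]) j" for b
      using less.hyps[of "acts @ [b]"] less.prems lt by simp
    have tk: "take (Suc (length acts)) (take j rs) = take (Suc (length acts)) rs" using lt by (simp add: min_def)
    show ?thesis
      using lt less.prems by (simp add: reachR_step[of acts "take j rs"] reachR_step[of acts rs] IH tk)
  qed
qed

lemma offR_factor:
  assumes hP: "\<And>t acts. t < length rs \<Longrightarrow> P (take (Suc t) rs) acts = Q t (rs ! t)"
    and "length acts \<le> j" "j < length rs"
  shows "offR p P rs acts j = reachR p P rs acts j * Q j (rs ! j)"
  using assms(2,3)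
proof (induction "length rs - length acts" arbitrary: acts rule: less_induct)
  case less
  show ?case
  proof (cases "length acts = j")
    case True
    thus ?thesis using less.prems hP offR_base[of acts rs p P] by (simp add: reachR_base)
  next
    case False
    hence lt: "length acts < j" using less.prems by simp
    have IH: "offR p P rs (acts @ [b]) j = reachR p P rs (acts @ [b]) j * Q j (rs ! j)" for b
      using less.hyps[of "acts @ [b]"] less.prems lt by simp
    show ?thesis
      using lt less.prems by (simp add: offR_step reachR_step IH algebra_simps)
  qed
qed

definition Xof :: "nat \<Rightarrow> real \<Rightarrow> policy \<Rightarrow> nat \<Rightarrow> nat \<Rightarrow> real" where
  "Xof n p P j s = (\<Sum>\<sigma>\<in>permutations_of_set {1..n}. (if relrank \<sigma> j = s then 1 else 0) * offR p P (rrs \<sigma>) [] j) / fact n"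

definition Rch :: "nat \<Rightarrow> real \<Rightarrow> policy \<Rightarrow> nat \<Rightarrow> real" where
  "Rch n p P j = (\<Sum>\<sigma>\<in>permutations_of_set {1..n}. reachR p P (rrs \<sigma>) [] j) / fact n"

lemma lenP: "\<sigma> \<in> permutations_of_set {1..n} \<Longrightarrow> length \<sigma> = n"
  using length_finite_permutations_of_set by fastforce

lemma sum_ind:
  assumes "j < length \<sigma>"
  shows "(\<Sum>s=1..Suc j. (if relrank \<sigma> j = s then 1 else 0::real)) = 1"
proof -
  have "relrank \<sigma> j \<in> {1..Suc j}" using relrank_bounds[OF assms] by simp
  thus ?thesis by (simp add: sum.delta')
qed

lemma sum_Xof:
  assumes "j < n"
  shows "(\<Sum>s=1..Suc j. Xof n p P j s) = (\<Sum>\<sigma>\<in>permutations_of_set {1..n}. offR p P (rrs \<sigma>) [] j) / fact n"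
proof -
  have "(\<Sum>s=1..Suc j. Xof n p P j s) =
        (\<Sum>s=1..Suc j. \<Sum>\<sigma>\<in>permutations_of_set {1..n}. (if relrank \<sigma> j = s then 1 else 0) * offR p P (rrs \<sigma>) [] j) / fact n"
    unfolding Xof_def by (simp only: sum_divide_distrib)
  also have "(\<Sum>s=1..Suc j. \<Sum>\<sigma>\<in>permutations_of_set {1..n}. (if relrank \<sigma> j = s then 1 else 0) * offR p P (rrs \<sigma>) [] j)
     = (\<Sum>\<sigma>\<in>permutations_of_set {1..n}. (\<Sum>s=1..Suc j. (if relrank \<sigma> j = s then 1 else 0)) * offR p P (rrs \<sigma>) [] j)"
    by (subst sum.swap) (simp only: sum_distrib_right)
  also have "\<dots> = (\<Sum>\<sigma>\<in>permutations_of_set {1..n}. offR p P (rrs \<sigma>) [] j)"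
  proof (rule sum.cong[OF refl])
    fix \<sigma> assume "\<sigma> \<in> permutations_of_set {1..n}"
    hence "(\<Sum>s=1..Suc j. (if relrank \<sigma> j = s then 1 else 0::real)) = 1"
      using assms by (intro sum_ind) (simp add: lenP)
    thus "(\<Sum>s=1..Suc j. (if relrank \<sigma> j = s then 1 else 0)) * offR p P (rrs \<sigma>) [] j = offR p P (rrs \<sigma>) [] j"
      by simp
  qed
  finally show ?thesis .
qed

lemma collect_X:
  "collect_prob n p P k = p * (\<Sum>j<n. \<Sum>s=1..Suc j. Xof n p P j s * cond_prob n (Suc j) s k)"
proof -
  let ?Pm = "permutations_of_set {1..n}"
  have "(\<Sum>\<sigma>\<in>?Pm. win p P \<sigma> k []) = (\<Sum>\<sigma>\<in>?Pm. \<Sum>j<n. p * ((if \<sigma> ! j \<le> k then 1 else 0) * offR p P (rrs \<sigma>) [] j))"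
    by (rule sum.cong[OF refl]) (simp add: win_offR lenP atLeast0LessThan mult.assoc)
  also have "\<dots> = (\<Sum>j<n. p * (\<Sum>\<sigma>\<in>?Pm. (if \<sigma> ! j \<le> k then 1 else 0) * offR p P (take (Suc j) (rrs \<sigma>)) [] j))"
  proof -
    have "(\<Sum>\<sigma>\<in>?Pm. \<Sum>j<n. p * ((if \<sigma> ! j \<le> k then 1 else 0) * offR p P (rrs \<sigma>) [] j)) =
          (\<Sum>j<n. \<Sum>\<sigma>\<in>?Pm. p * ((if \<sigma> ! j \<le> k then 1 else 0) * offR p P (rrs \<sigma>) [] j))"
      by (rule sum.swap)
    also have "\<dots> = (\<Sum>j<n. p * (\<Sum>\<sigma>\<in>?Pm. (if \<sigma> ! j \<le> k then 1 else 0) * offR p P (take (Suc j) (rrs \<sigma>)) [] j))"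
    proof (rule sum.cong[OF refl])
      fix j assume j: "j \<in> {..<n}"
      have "(\<Sum>\<sigma>\<in>?Pm. p * ((if \<sigma> ! j \<le> k then 1 else 0) * offR p P (rrs \<sigma>) [] j)) =
            p * (\<Sum>\<sigma>\<in>?Pm. (if \<sigma> ! j \<le> k then 1 else 0) * offR p P (rrs \<sigma>) [] j)"
        by (simp add: sum_distrib_left)
      also have "(\<Sum>\<sigma>\<in>?Pm. (if \<sigma> ! j \<le> k then 1 else 0) * offR p P (rrs \<sigma>) [] j) =
            (\<Sum>\<sigma>\<in>?Pm. (if \<sigma> ! j \<le> k then 1 else 0) * offR p P (take (Suc j) (rrs \<sigma>)) [] j)"
        by (rule sum.cong[OF refl]) (use j in \<open>simp add: offR_local[symmetric] lenP\<close>)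
      finally show "(\<Sum>\<sigma>\<in>?Pm. p * ((if \<sigma> ! j \<le> k then 1 else 0) * offR p P (rrs \<sigma>) [] j)) =
            p * (\<Sum>\<sigma>\<in>?Pm. (if \<sigma> ! j \<le> k then 1 else 0) * offR p P (take (Suc j) (rrs \<sigma>)) [] j)" .
    qed
    finally show ?thesis .
  qed
  also have "\<dots> = (\<Sum>j<n. p * (\<Sum>s=1..Suc j. fact n * Xof n p P j s * cond_prob n (Suc j) s k))"
  proof (rule sum.cong[OF refl])
    fix j assume j: "j \<in> {..<n}"
    have "(\<Sum>\<sigma>\<in>?Pm. (if \<sigma> ! j \<le> k then 1 else 0) * offR p P (take (Suc j) (rrs \<sigma>)) [] j) =
          (\<Sum>s=1..Suc j. (\<Sum>\<sigma>\<in>?Pm. (if relrank \<sigma> j = s then 1 else 0) * offR p P (take (Suc j) (rrs \<sigma>)) [] j) * cond_prob n (Suc j) s k)"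
      by (rule cond_decomp[where g="\<lambda>r. offR p P r [] j"]) (use j in simp)
    also have "\<dots> = (\<Sum>s=1..Suc j. fact n * Xof n p P j s * cond_prob n (Suc j) s k)"
    proof (rule sum.cong[OF refl])
      fix s
      have "(\<Sum>\<sigma>\<in>?Pm. (if relrank \<sigma> j = s then 1 else 0) * offR p P (take (Suc j) (rrs \<sigma>)) [] j) =
            (\<Sum>\<sigma>\<in>?Pm. (if relrank \<sigma> j = s then 1 else 0) * offR p P (rrs \<sigma>) [] j)"
        by (rule sum.cong[OF refl]) (use j in \<open>simp add: offR_local[symmetric] lenP\<close>)
      also have "\<dots> = fact n * Xof n p P j s" unfolding Xof_def by simp
      finally show "(\<Sum>\<sigma>\<in>?Pm. (if relrank \<sigma> j = s then 1 else 0) * offR p P (take (Suc j) (rrs \<sigma>)) [] j) * cond_prob n (Suc j) s k =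
            fact n * Xof n p P j s * cond_prob n (Suc j) s k" by simp
    qed
    finally show "p * (\<Sum>\<sigma>\<in>?Pm. (if \<sigma> ! j \<le> k then 1 else 0) * offR p P (take (Suc j) (rrs \<sigma>)) [] j) =
          p * (\<Sum>s=1..Suc j. fact n * Xof n p P j s * cond_prob n (Suc j) s k)" by simp
  qed
  also have "\<dots> = fact n * (p * (\<Sum>j<n. \<Sum>s=1..Suc j. Xof n p P j s * cond_prob n (Suc j) s k))"
    by (simp only: sum_distrib_left mult_ac)
  finally show ?thesis unfolding collect_prob_def by simp
qed

lemma Rch_0: "Rch n p P 0 = 1"
  unfolding Rch_def by (simp add: reachR_base)

lemma Rch_Suc:
  assumes "j < n"
  shows "Rch n p P (Suc j) = Rch n p P j - p * (\<Sum>s=1..Suc j. Xof n p P j s)"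
proof -
  have "(\<Sum>\<sigma>\<in>permutations_of_set {1..n}. reachR p P (rrs \<sigma>) [] (Suc j)) =
        (\<Sum>\<sigma>\<in>permutations_of_set {1..n}. reachR p P (rrs \<sigma>) [] j - p * offR p P (rrs \<sigma>) [] j)"
    by (rule sum.cong[OF refl]) (use assms in \<open>simp add: reach_offR lenP\<close>)
  thus ?thesis unfolding Rch_def sum_Xof[OF assms]
    by (simp add: sum_subtractf sum_distrib_left diff_divide_distrib)
qed

lemma Rch_closed:
  "j \<le> n \<Longrightarrow> Rch n p P j = 1 - p * (\<Sum>i<j. \<Sum>s=1..Suc i. Xof n p P i s)"
proof (induction j)
  case 0
  thus ?case by (simp add: Rch_0)
next
  case (Suc j)
  thus ?case by (simp add: Rch_Suc algebra_simps)
qed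

lemma Xof_indep:
  assumes "j < n" "s \<in> {1..Suc j}" 
  shows "(\<Sum>\<sigma>\<in>permutations_of_set {1..n}. (if relrank \<sigma> j = s then 1 else 0) * reachR p P (rrs \<sigma>) [] j) / fact n
         = Rch n p P j / real (Suc j)"
proof -
  have "(\<Sum>\<sigma>\<in>permutations_of_set {1..n}. (if relrank \<sigma> j = s then 1 else 0) * reachR p P (rrs \<sigma>) [] j) =
        (\<Sum>\<sigma>\<in>permutations_of_set {1..n}. (if relrank \<sigma> j = s then 1 else 0) * (\<lambda>r. reachR p P r [] j) (take j (rrs \<sigma>)))"
    by (rule sum.cong[OF refl]) (use assms in \<open>simp add: reachR_local[symmetric] lenP\<close>)
  also have "\<dots> = (\<Sum>\<sigma>\<in>permutations_of_set {1..n}. (\<lambda>r. reachR p P r [] j) (take j (rrs \<sigma>))) / real (Suc j)"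
    by (rule indep_last[OF assms])
  also have "(\<Sum>\<sigma>\<in>permutations_of_set {1..n}. (\<lambda>r. reachR p P r [] j) (take j (rrs \<sigma>))) =
             (\<Sum>\<sigma>\<in>permutations_of_set {1..n}. reachR p P (rrs \<sigma>) [] j)"
    by (rule sum.cong[OF refl]) (use assms in \<open>simp add: reachR_local[symmetric] lenP\<close>)
  finally show ?thesis unfolding Rch_def by simp
qed

lemma Xof_bounds:
  assumes P: "P \<in> policies" and p: "0 \<le> p" "p \<le> 1" and j: "j < n" "s \<in> {1..Suc j}"
  shows "0 \<le> Xof n p P j s" "Xof n p P j s \<le> Rch n p P j / real (Suc j)"
proof -
  have Pb: "\<And>rs acts. 0 \<le> P rs acts \<and> P rs acts \<le> 1" using P by (simp add: policies_def)
  have b: "\<And>\<sigma>. \<sigma> \<in> permutations_of_set {1..n} \<Longrightarrow> 0 \<le> offR p P (rrs \<sigma>) [] j \<and> offR p P (rrs \<sigma>) [] j \<le> reachR p P (rrs \<sigma>) [] j"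
    using offR_bounds[OF Pb p] j by (simp add: lenP)
  show "0 \<le> Xof n p P j s" unfolding Xof_def
    using b by (intro divide_nonneg_pos sum_nonneg) auto
  have "Xof n p P j s \<le> (\<Sum>\<sigma>\<in>permutations_of_set {1..n}. (if relrank \<sigma> j = s then 1 else 0) * reachR p P (rrs \<sigma>) [] j) / fact n"
    unfolding Xof_def using b by (intro divide_right_mono sum_mono mult_left_mono) auto
  thus "Xof n p P j s \<le> Rch n p P j / real (Suc j)" using Xof_indep[OF j] by simp
qed

definition lpS :: "(nat \<Rightarrow> nat \<Rightarrow> real) \<Rightarrow> nat \<Rightarrow> real" where
  "lpS x t = (\<Sum>\<tau>=1..t-1. \<Sum>\<sigma>=1..\<tau>. x \<tau> \<sigma>)"

lemma lpS_Suc: "lpS x (Suc j) = (\<Sum>i<j. \<Sum>s=1..Suc i. x (Suc i) s)"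
  unfolding lpS_def by (simp add: sum.atLeast1_atMost_eq)

lemma obj_eq: "(\<Sum>t=1..n. \<Sum>s=1..t. x t s * cond_prob n t s k) =
   (\<Sum>j<n. \<Sum>s=1..Suc j. x (Suc j) s * cond_prob n (Suc j) s k)"
  by (simp add: sum.atLeast1_atMost_eq)

lemma denom_pos:
  fixes p :: real
  assumes "0 < p" "p \<le> 1" "1 \<le> k"
  shows "0 < 1 - (1 - p) ^ k"
proof -
  have "(1 - p) ^ k \<le> (1 - p) ^ 1" using assms by (intro power_decreasing) auto
  thus ?thesis using assms by simp
qed

lemma lp_feasibleD:
  assumes "lp_feasible n p x \<gamma>"
  shows "\<And>t s. t \<in> {1..n} \<Longrightarrow> s \<in> {1..t} \<Longrightarrow> 0 \<le> x t s"
    and "\<And>t s. t \<in> {1..n} \<Longrightarrow> s \<in> {1..t} \<Longrightarrow> x t s \<le> (1 / real t) * (1 - p * lpS x t)"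
    and "\<And>k. k \<in> {1..n} \<Longrightarrow> \<gamma> \<le> p / (1 - (1 - p) ^ k) * (\<Sum>t=1..n. \<Sum>s=1..t. x t s * cond_prob n t s k)"
  using assms unfolding lp_feasible_def lpS_def by auto

lemma robust_ratio_le:
  assumes "k \<in> {1..n}"
  shows "robust_ratio n p P \<le> collect_prob n p P k / (1 - (1 - p) ^ k)"
  unfolding robust_ratio_def using assms by (intro Min_le) auto

lemma robust_ratio_ge:
  assumes "1 \<le> n" "\<And>k. k \<in> {1..n} \<Longrightarrow> \<gamma> \<le> collect_prob n p P k / (1 - (1 - p) ^ k)"
  shows "\<gamma> \<le> robust_ratio n p P"
  unfolding robust_ratio_def using assms by (subst Min_ge_iff) auto

lemma policy_feasible:
  assumes P: "P \<in> policies" and p: "0 < p" "p \<le> 1"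
  shows "lp_feasible n p (\<lambda>t s. Xof n p P (t - 1) s) (robust_ratio n p P)"
proof -
  let ?x = "\<lambda>t s. Xof n p P (t - 1) s"
  have lpSx: "lpS ?x t = (\<Sum>i<t-1. \<Sum>s=1..Suc i. Xof n p P i s)" for t
    unfolding lpS_def by (simp add: sum.atLeast1_atMost_eq)
  have c1: "\<forall>t\<in>{1..n}. \<forall>s\<in>{1..t}. 0 \<le> ?x t s"
  proof (intro ballI)
    fix t s assume t: "t \<in> {1..n}" and s: "s \<in> {1..t}"
    show "0 \<le> ?x t s" using Xof_bounds(1)[OF P _ p(2), of "t - 1" n s] p t s by auto
  qed
  have c2: "\<forall>t\<in>{1..n}. \<forall>s\<in>{1..t}. ?x t s \<le> (1 / real t) * (1 - p * (\<Sum>\<tau>=1..t-1. \<Sum>\<sigma>=1..\<tau>. ?x \<tau> \<sigma>))"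
  proof (intro ballI)
    fix t s assume t: "t \<in> {1..n}" and s: "s \<in> {1..t}"
    have "?x t s \<le> Rch n p P (t - 1) / real (Suc (t - 1))"
      using Xof_bounds(2)[OF P _ p(2), of "t - 1" n s] p t s by auto
    also have "Rch n p P (t - 1) = 1 - p * lpS ?x t"
      unfolding lpSx using t by (subst Rch_closed) auto
    also have "real (Suc (t - 1)) = real t" using t by auto
    finally show "?x t s \<le> (1 / real t) * (1 - p * (\<Sum>\<tau>=1..t-1. \<Sum>\<sigma>=1..\<tau>. ?x \<tau> \<sigma>))"
      unfolding lpS_def by simp
  qed
  have c3: "\<forall>k\<in>{1..n}. robust_ratio n p P \<le> p / (1 - (1 - p) ^ k) * (\<Sum>t=1..n. \<Sum>s=1..t. ?x t s * cond_prob n t s k)"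
  proof
    fix k assume k: "k \<in> {1..n}"
    have "robust_ratio n p P \<le> collect_prob n p P k / (1 - (1 - p) ^ k)" by (rule robust_ratio_le[OF k])
    also have "collect_prob n p P k = p * (\<Sum>t=1..n. \<Sum>s=1..t. ?x t s * cond_prob n t s k)"
      unfolding collect_X obj_eq by simp
    finally show "robust_ratio n p P \<le> p / (1 - (1 - p) ^ k) * (\<Sum>t=1..n. \<Sum>s=1..t. ?x t s * cond_prob n t s k)"
      by simp
  qed
  show ?thesis unfolding lp_feasible_def using c1 c2 c3 by blast
qed

lemma lp_achieve:
  assumes feas: "lp_feasible n p x \<gamma>" and p: "0 < p" "p \<le> 1" and n: "1 \<le> n"
    and HP: "\<And>\<sigma> t acts. \<sigma> \<in> permutations_of_set {1..n} \<Longrightarrow> t < n \<Longrightarrow>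
       P (take (Suc t) (rrs \<sigma>)) acts = real (Suc t) * x (Suc t) (relrank \<sigma> t) / (1 - p * lpS x (Suc t))"
  shows "\<gamma> \<le> robust_ratio n p P"
proof -
  define Q where "Q t s = real (Suc t) * x (Suc t) s / (1 - p * lpS x (Suc t))" for t s
  have X: "\<forall>s\<in>{1..Suc j}. Xof n p P j s = x (Suc j) s" if "j < n" for j
    using that
  proof (induction j rule: less_induct)
    case (less j)
    define D where "D = 1 - p * lpS x (Suc j)"
    have RD: "Rch n p P j = D"
    proof -
      have "Rch n p P j = 1 - p * (\<Sum>i<j. \<Sum>s=1..Suc i. Xof n p P i s)"
        using less.prems by (intro Rch_closed) simp
      also have "(\<Sum>i<j. \<Sum>s=1..Suc i. Xof n p P i s) = (\<Sum>i<j. \<Sum>s=1..Suc i. x (Suc i) s)"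
        using less.IH less.prems by (intro sum.cong refl) auto
      finally show ?thesis unfolding D_def lpS_Suc .
    qed
    show ?case
    proof
      fix s assume s: "s \<in> {1..Suc j}"
      have "Xof n p P j s = (\<Sum>\<sigma>\<in>permutations_of_set {1..n}. (if relrank \<sigma> j = s then 1 else 0) * (reachR p P (rrs \<sigma>) [] j * Q j s)) / fact n"
        unfolding Xof_def
      proof (rule arg_cong[where f="\<lambda>z. z / fact n"], rule sum.cong[OF refl])
        fix \<sigma> assume \<sigma>: "\<sigma> \<in> permutations_of_set {1..n}"
        have "offR p P (rrs \<sigma>) [] j = reachR p P (rrs \<sigma>) [] j * Q j (rrs \<sigma> ! j)"
        proof (rule offR_factor)
          show "\<And>t acts. t < length (rrs \<sigma>) \<Longrightarrow> P (take (Suc t) (rrs \<sigma>)) acts = Q t (rrs \<sigma> ! t)"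
            using HP[OF \<sigma>] lenP[OF \<sigma>] by (simp add: Q_def)
        qed (use less.prems lenP[OF \<sigma>] in auto)
        thus "(if relrank \<sigma> j = s then 1 else 0) * offR p P (rrs \<sigma>) [] j =
              (if relrank \<sigma> j = s then 1 else 0) * (reachR p P (rrs \<sigma>) [] j * Q j s)"
          using less.prems lenP[OF \<sigma>] by auto
      qed
      also have "\<dots> = Q j s * ((\<Sum>\<sigma>\<in>permutations_of_set {1..n}. (if relrank \<sigma> j = s then 1 else 0) * reachR p P (rrs \<sigma>) [] j) / fact n)"
        by (simp add: sum_distrib_left mult_ac)
      also have "\<dots> = Q j s * (D / real (Suc j))"
        using Xof_indep[OF less.prems s] RD by simp
      also have "\<dots> = x (Suc j) s"
      proof (cases "D = 0")
        case True
        have "x (Suc j) s \<le> (1 / real (Suc j)) * D"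
          using lp_feasibleD(2)[OF feas, of "Suc j" s] less.prems s by (simp add: D_def)
        moreover have "0 \<le> x (Suc j) s" using lp_feasibleD(1)[OF feas, of "Suc j" s] less.prems s by simp
        ultimately have "x (Suc j) s = 0" using True by simp
        thus ?thesis using True by (simp add: Q_def D_def)
      next
        case False
        thus ?thesis by (simp add: Q_def D_def[symmetric])
      qed
      finally show "Xof n p P j s = x (Suc j) s" .
    qed
  qed
  show ?thesis
  proof (rule robust_ratio_ge[OF n])
    fix k assume k: "k \<in> {1..n}"
    have d: "0 < 1 - (1 - p) ^ k" using denom_pos[OF p] k by simp
    have "collect_prob n p P k = p * (\<Sum>j<n. \<Sum>s=1..Suc j. x (Suc j) s * cond_prob n (Suc j) s k)"
      unfolding collect_X using X by (intro arg_cong[where f="\<lambda>z. p * z"] sum.cong refl) auto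
    also have "\<dots> = p * (\<Sum>t=1..n. \<Sum>s=1..t. x t s * cond_prob n t s k)" unfolding obj_eq ..
    finally have cp: "collect_prob n p P k = p * (\<Sum>t=1..n. \<Sum>s=1..t. x t s * cond_prob n t s k)" .
    have "\<gamma> \<le> p / (1 - (1 - p) ^ k) * (\<Sum>t=1..n. \<Sum>s=1..t. x t s * cond_prob n t s k)"
      by (rule lp_feasibleD(3)[OF feas k])
    also have "\<dots> = collect_prob n p P k / (1 - (1 - p) ^ k)" unfolding cp by simp
    finally show "\<gamma> \<le> collect_prob n p P k / (1 - (1 - p) ^ k)" .
  qed
qed

lemma frac_bounds:
  fixes t x D :: real
  assumes "0 < t" "0 \<le> x" "x \<le> (1 / t) * D"
  shows "0 \<le> t * x / D \<and> t * x / D \<le> 1"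
proof (cases "0 < D")
  case True
  have "t * x \<le> D" using assms by (simp add: field_simps)
  thus ?thesis using True assms by (simp add: divide_le_eq_1)
next
  case False
  have "(1 / t) * D \<le> 0" using assms False by (intro mult_nonneg_nonpos) auto
  hence "x \<le> 0" using assms by linarith
  hence "x = 0" using assms by simp
  thus ?thesis by simp
qed

lemma last_take_rrs:
  assumes "t < length \<sigma>"
  shows "last (take (Suc t) (rrs \<sigma>)) = relrank \<sigma> t"
proof -
  have l: "length (take (Suc t) (rrs \<sigma>)) = Suc t" using assms by simp
  hence ne: "take (Suc t) (rrs \<sigma>) \<noteq> []" by (metis Zero_not_Suc list.size(3))
  have "last (take (Suc t) (rrs \<sigma>)) = take (Suc t) (rrs \<sigma>) ! t" using last_conv_nth[OF ne] l by simp
  thus ?thesis using assms by simp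
qed

lemma lp_policy_take:
  assumes "\<sigma> \<in> permutations_of_set {1..n}" "t < n"
  shows "lp_policy p x (take (Suc t) (rrs \<sigma>)) acts = real (Suc t) * x (Suc t) (relrank \<sigma> t) / (1 - p * lpS x (Suc t))"
proof -
  have l: "length \<sigma> = n" by (rule lenP[OF assms(1)])
  have len: "length (take (Suc t) (rrs \<sigma>)) = Suc t" using assms(2) l by simp
  have la: "last (take (Suc t) (rrs \<sigma>)) = relrank \<sigma> t" using assms(2) l by (simp add: last_take_rrs)
  show ?thesis unfolding lp_policy_def Let_def lpS_def len la by simp
qed

theorem theorem2:
  fixes n :: nat and p :: real
  assumes "1 \<le> n" and "0 < p" and "p \<le> 1"
  shows "opt_robust_ratio n p = lp_value n p \<and>
         (\<forall>x \<gamma>. lp_optimal n p x \<gamma> \<longrightarrow> is_robust n p (opt_robust_ratio n p) (lp_policy p x))"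
proof -
  let ?G = "{\<gamma>. \<exists>x. lp_feasible n p x \<gamma>}"
  define B where "B = (\<Sum>t=1..n. \<Sum>s=1..t. \<bar>cond_prob n t s 1\<bar>)"
  have bnd: "\<gamma> \<le> B" if f: "lp_feasible n p x \<gamma>" for x \<gamma>
  proof -
    have "\<gamma> \<le> p / (1 - (1 - p) ^ 1) * (\<Sum>t=1..n. \<Sum>s=1..t. x t s * cond_prob n t s 1)"
      using lp_feasibleD(3)[OF f, of 1] assms by simp
    also have "p / (1 - (1 - p) ^ 1) = 1" using assms by simp
    also have "(\<Sum>t=1..n. \<Sum>s=1..t. x t s * cond_prob n t s 1) \<le> B" unfolding B_def
    proof (intro sum_mono)
      fix t s assume t: "t \<in> {1..n}" and s: "s \<in> {1..t}"
      have x0: "0 \<le> x t s" using lp_feasibleD(1)[OF f t s] .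
      have "0 \<le> lpS x t" unfolding lpS_def using lp_feasibleD(1)[OF f] t
        by (intro sum_nonneg) auto
      hence "1 - p * lpS x t \<le> 1" using assms by simp
      moreover have "x t s \<le> (1 / real t) * (1 - p * lpS x t)" using lp_feasibleD(2)[OF f t s] .
      moreover have "1 / real t \<le> 1" using t by simp
      moreover have "(1 / real t) * (1 - p * lpS x t) \<le> (1 / real t) * 1"
        using \<open>1 - p * lpS x t \<le> 1\<close> by (intro mult_left_mono) auto
      ultimately have x1: "x t s \<le> 1" by linarith
      have "x t s * cond_prob n t s 1 \<le> x t s * \<bar>cond_prob n t s 1\<bar>" using x0 by (intro mult_left_mono) auto
      also have "\<dots> \<le> 1 * \<bar>cond_prob n t s 1\<bar>" using x1 by (intro mult_right_mono) auto
      finally show "x t s * cond_prob n t s 1 \<le> \<bar>cond_prob n t s 1\<bar>" by simp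
    qed
    finally show ?thesis by simp
  qed
  have bdd: "bdd_above ?G" using bnd by (auto intro!: bdd_aboveI)
  have ne: "?G \<noteq> {}"
  proof -
    have "lp_feasible n p (\<lambda>_ _. 0) 0" unfolding lp_feasible_def by simp
    thus ?thesis by blast
  qed
  have A: "robust_ratio n p P \<le> lp_value n p" if "P \<in> policies" for P
    unfolding lp_value_def using policy_feasible[OF that assms(2,3)] by (intro cSup_upper[OF _ bdd]) blast
  define P' where "P' x rs acts = (if 1 \<le> length rs \<and> length rs \<le> n \<and> 1 \<le> last rs \<and> last rs \<le> length rs
      then lp_policy p x rs acts else 0)" for x :: "nat \<Rightarrow> nat \<Rightarrow> real" and rs acts
  have P'pol: "P' x \<in> policies" if f: "lp_feasible n p x \<gamma>" for x \<gamma>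
    unfolding policies_def
  proof (intro CollectI allI)
    fix rs :: "nat list" and acts :: "bool list"
    show "0 \<le> P' x rs acts \<and> P' x rs acts \<le> 1"
    proof (cases "1 \<le> length rs \<and> length rs \<le> n \<and> 1 \<le> last rs \<and> last rs \<le> length rs")
      case True
      have t: "length rs \<in> {1..n}" and s: "last rs \<in> {1..length rs}" using True by auto
      have "P' x rs acts = real (length rs) * x (length rs) (last rs) / (1 - p * lpS x (length rs))"
        unfolding P'_def if_P[OF True] lp_policy_def Let_def lpS_def by simp
      moreover have "0 \<le> real (length rs) * x (length rs) (last rs) / (1 - p * lpS x (length rs)) \<and>
          real (length rs) * x (length rs) (last rs) / (1 - p * lpS x (length rs)) \<le> 1"
        using t lp_feasibleD(1)[OF f t s] lp_feasibleD(2)[OF f t s] by (intro frac_bounds) auto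
      ultimately show ?thesis by simp
    next
      case False
      show ?thesis unfolding P'_def if_not_P[OF False] by simp
    qed
  qed
  have C: "\<gamma> \<le> robust_ratio n p (P' x)" if f: "lp_feasible n p x \<gamma>" for x \<gamma>
  proof (rule lp_achieve[OF f assms(2,3,1)])
    fix \<sigma> t acts assume \<sigma>: "\<sigma> \<in> permutations_of_set {1..n}" and t: "t < n"
    have l: "length \<sigma> = n" by (rule lenP[OF \<sigma>])
    have "relrank \<sigma> t \<in> {1..Suc t}" using relrank_bounds[of t \<sigma>] t l by simp
    hence "1 \<le> length (take (Suc t) (rrs \<sigma>)) \<and> length (take (Suc t) (rrs \<sigma>)) \<le> n \<and>
           1 \<le> last (take (Suc t) (rrs \<sigma>)) \<and> last (take (Suc t) (rrs \<sigma>)) \<le> length (take (Suc t) (rrs \<sigma>))"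
      using t l last_take_rrs[of t \<sigma>] by (simp add: min_def)
    thus "P' x (take (Suc t) (rrs \<sigma>)) acts = real (Suc t) * x (Suc t) (relrank \<sigma> t) / (1 - p * lpS x (Suc t))"
      unfolding P'_def using lp_policy_take[OF \<sigma> t] by simp
  qed
  have polne: "policies \<noteq> {}"
  proof -
    have "(\<lambda>_ _. 0) \<in> policies" unfolding policies_def by simp
    thus ?thesis by blast
  qed
  have bddR: "bdd_above (robust_ratio n p ` policies)" using A by (auto intro!: bdd_aboveI)
  have le1: "opt_robust_ratio n p \<le> lp_value n p"
    unfolding opt_robust_ratio_def by (rule cSUP_least[OF polne A])
  have le2: "lp_value n p \<le> opt_robust_ratio n p"
    unfolding lp_value_def
  proof (rule cSup_least[OF ne])
    fix \<gamma> assume "\<gamma> \<in> ?G"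
    then obtain x where f: "lp_feasible n p x \<gamma>" by blast
    have "\<gamma> \<le> robust_ratio n p (P' x)" by (rule C[OF f])
    also have "\<dots> \<le> opt_robust_ratio n p"
      unfolding opt_robust_ratio_def by (rule cSUP_upper[OF P'pol[OF f] bddR])
    finally show "\<gamma> \<le> opt_robust_ratio n p" .
  qed
  have eq: "opt_robust_ratio n p = lp_value n p" using le1 le2 by simp
  have part2: "is_robust n p (opt_robust_ratio n p) (lp_policy p x)" if o: "lp_optimal n p x \<gamma>" for x \<gamma>
  proof -
    have f: "lp_feasible n p x \<gamma>" and mx: "\<And>x' \<gamma>'. lp_feasible n p x' \<gamma>' \<Longrightarrow> \<gamma>' \<le> \<gamma>"
      using o unfolding lp_optimal_def by auto
    have "lp_value n p = \<gamma>" unfolding lp_value_def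
      by (rule cSup_eq_maximum) (use f mx in auto)
    moreover have "\<gamma> \<le> robust_ratio n p (lp_policy p x)"
      by (rule lp_achieve[OF f assms(2,3,1)]) (rule lp_policy_take)
    ultimately show ?thesis unfolding is_robust_def eq by simp
  qed
  show ?thesis using eq part2 by blast
qed

end
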